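(* Let $P, Q\subseteq\mathbb{R}^7$ be distinct associative $3$-planes. Then $\Theta(P)\cap\Theta(Q) = (P\cap Q)\lrcorner\varphi = \{v\lrcorner\varphi : v\in P\cap Q\}$.
   Context: Equip $\mathbb{R}^7$ with its standard inner product, orientation and basis. Let $\varphi = e_{123} - e_{167} - e_{527} - e_{563} - e_{415} - e_{426} - e_{437}$ ($e_{ijk} = e_i\wedge e_j\wedge e_k$), $\psi = \star\varphi = e_{4567} - e_{4523} - e_{4163} - e_{4127} - e_{2637} - e_{1537} - e_{1526}$, and define $\times$ by $\langle u \times v, w \rangle = \varphi(u,v,w)$. A $3$-dimensional subspace is associative if closed under $\times$. For $u,v$: $u\wedge v$ is the 2-form $(a,b)\mapsto \langle u,a\rangle\langle v,b\rangle - \langle u,b\rangle\langle v,a\rangle$; $u\lrcorner\varphi$ is the 2-form $(a,b)\mapsto \varphi(u,a,b)$; $\Psi_{uv}$ is the 2-form $(a,b)\mapsto\psi(u,v,a,b)$. For associative $P$, $\Theta(P) = \Lambda^2(P)\oplus\Psi(P)$ where $\Lambda^2(P) = \mathrm{Span}\{u\wedge v: u,v\in P\}$ and $\Psi(P) = \mathrm{Span}\{\Psi_{uv} : u,v\in P\}$. *)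

theory Defs
  imports "HOL-Analysis.Analysis"
begin

text \<open>Vectors of R^7 are \<open>real^7\<close>; the standard basis vector e_i is \<open>axis i 1\<close> for the
numerals i = 1..7 of type 7. Forms are represented as multilinear real-valued functions.\<close>

type_synonym vec7 = "real^7"
type_synonym form2 = "vec7 \<Rightarrow> vec7 \<Rightarrow> real"

definition e3 :: "7 \<Rightarrow> 7 \<Rightarrow> 7 \<Rightarrow> vec7 \<Rightarrow> vec7 \<Rightarrow> vec7 \<Rightarrow> real" where
  "e3 i j k u v w =
     u$i * (v$j * w$k - v$k * w$j)
   - u$j * (v$i * w$k - v$k * w$i)
   + u$k * (v$i * w$j - v$j * w$i)"

definition e4 :: "7 \<Rightarrow> 7 \<Rightarrow> 7 \<Rightarrow> 7 \<Rightarrow> vec7 \<Rightarrow> vec7 \<Rightarrow> vec7 \<Rightarrow> vec7 \<Rightarrow> real" where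
  "e4 i j k l a b c d =
     a$i * e3 j k l b c d - a$j * e3 i k l b c d + a$k * e3 i j l b c d - a$l * e3 i j k b c d"

definition phi :: "vec7 \<Rightarrow> vec7 \<Rightarrow> vec7 \<Rightarrow> real" where
  "phi u v w = e3 1 2 3 u v w - e3 1 6 7 u v w - e3 5 2 7 u v w - e3 5 6 3 u v w
             - e3 4 1 5 u v w - e3 4 2 6 u v w - e3 4 3 7 u v w"

definition psi :: "vec7 \<Rightarrow> vec7 \<Rightarrow> vec7 \<Rightarrow> vec7 \<Rightarrow> real" where
  "psi a b c d = e4 4 5 6 7 a b c d - e4 4 5 2 3 a b c d - e4 4 1 6 3 a b c d
               - e4 4 1 2 7 a b c d - e4 2 6 3 7 a b c d - e4 1 5 3 7 a b c d
               - e4 1 5 2 6 a b c d"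

text \<open>Cross product: \<langle>u \<times> v, w\<rangle> = phi u v w.\<close>
definition cross7 :: "vec7 \<Rightarrow> vec7 \<Rightarrow> vec7" where
  "cross7 u v = (\<chi> i. phi u v (axis i 1))"

definition associative :: "vec7 set \<Rightarrow> bool" where
  "associative P \<longleftrightarrow> subspace P \<and> dim P = 3 \<and> (\<forall>u\<in>P. \<forall>v\<in>P. cross7 u v \<in> P)"

definition wedge :: "vec7 \<Rightarrow> vec7 \<Rightarrow> form2" where
  "wedge u v = (\<lambda>a b. (u \<bullet> a) * (v \<bullet> b) - (u \<bullet> b) * (v \<bullet> a))"

definition contr :: "vec7 \<Rightarrow> form2" where
  "contr u = (\<lambda>a b. phi u a b)"

definition Psi2 :: "vec7 \<Rightarrow> vec7 \<Rightarrow> form2" where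
  "Psi2 u v = (\<lambda>a b. psi u v a b)"

definition form_span :: "form2 set \<Rightarrow> form2 set" where
  "form_span S = {f. \<exists>t c. finite t \<and> t \<subseteq> S \<and> f = (\<lambda>a b. \<Sum>g\<in>t. c g * g a b)}"

definition Lambda2 :: "vec7 set \<Rightarrow> form2 set" where
  "Lambda2 P = form_span {wedge u v | u v. u \<in> P \<and> v \<in> P}"

definition PsiP :: "vec7 set \<Rightarrow> form2 set" where
  "PsiP P = form_span {Psi2 u v | u v. u \<in> P \<and> v \<in> P}"

definition Theta :: "vec7 set \<Rightarrow> form2 set" where
  "Theta P = {(\<lambda>a b. \<alpha> a b + \<beta> a b) | \<alpha> \<beta>. \<alpha> \<in> Lambda2 P \<and> \<beta> \<in> PsiP P}"

end

theory Submission
  imports Defs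
begin


lemma exhaust_7:
  fixes x :: 7
  shows "x = 1 \<or> x = 2 \<or> x = 3 \<or> x = 4 \<or> x = 5 \<or> x = 6 \<or> x = 7"
proof (induct x)
  case (of_int z)
  then have "z = 0 \<or> z = 1 \<or> z = 2 \<or> z = 3 \<or> z = 4 \<or> z = 5 \<or> z = 6" by fastforce
  then show ?case by auto
qed

lemma UNIV_7: "UNIV = {1,2,3,4,5,6,7::7}"
  using exhaust_7 by auto

lemma sum_7: "sum f (UNIV::7 set) = f 1 + f 2 + f 3 + f 4 + f 5 + f 6 + f 7"
  unfolding UNIV_7 by (simp add: ac_simps)

lemma inner7: "(x::real^7) \<bullet> y = x$1*y$1 + x$2*y$2 + x$3*y$3 + x$4*y$4 + x$5*y$5 + x$6*y$6 + x$7*y$7"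
  unfolding inner_vec_def sum_7 by simp

lemma cross7_comp: "cross7 u v $ k = phi u v (axis k 1)" by (simp add: cross7_def)

lemma phi_inner: "phi u v w = cross7 u v \<bullet> w"
  unfolding inner7 cross7_comp
  by (simp add: phi_def e3_def axis_def algebra_simps)

lemma phi_cyc: "phi u v w = phi v w u"
  by (simp add: phi_def e3_def algebra_simps)
lemma phi_swap: "phi u v w = - phi v u w"
  by (simp add: phi_def e3_def algebra_simps)

lemma key: "phi (cross7 x y) a b = wedge x y a b - psi x y a b"
  unfolding wedge_def inner7
  apply (simp add: phi_def psi_def e4_def e3_def axis_def cross7_comp)
  by algebra

lemma psi_24: "psi x y a y = 0"
  by (simp add: psi_def e4_def e3_def algebra_simps)

lemma contr_inner: "contr x a b = cross7 a b \<bullet> x"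
  unfolding contr_def by (metis phi_cyc phi_inner)

lemma phi_uvu: "phi u v u = 0" by (simp add: phi_def e3_def algebra_simps)
lemma phi_uvv: "phi u v v = 0" by (simp add: phi_def e3_def algebra_simps)

lemma cross_orth1: "cross7 u v \<bullet> u = 0"
  using phi_uvu by (simp add: phi_inner)

lemma cross_orth2: "cross7 u v \<bullet> v = 0"
  using phi_uvv by (simp add: phi_inner)

lemma cross_norm: "cross7 x a \<bullet> cross7 x a = (x \<bullet> x) * (a \<bullet> a) - (x \<bullet> a)^2"
proof -
  have "cross7 x a \<bullet> cross7 x a = phi x a (cross7 x a)" by (simp add: phi_inner)
  also have "\<dots> = phi (cross7 x a) x a" by (metis phi_cyc)
  also have "\<dots> = wedge x a x a" using key[of x a x a] psi_24[of x a x] by simp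
  finally show ?thesis by (simp add: wedge_def power2_eq_square inner_commute)
qed

lemma vec_eq_inner: "(\<And>c. (x::real^7) \<bullet> c = y \<bullet> c) \<Longrightarrow> x = y"
  by (metis inner_diff_left inner_eq_zero_iff right_minus_eq)

lemma cross_triple: "cross7 w (cross7 v w) = (w \<bullet> w) *\<^sub>R v - (w \<bullet> v) *\<^sub>R w"
proof (rule vec_eq_inner)
  fix c
  have "cross7 w (cross7 v w) \<bullet> c = phi w (cross7 v w) c" by (simp add: phi_inner)
  also have "\<dots> = phi (cross7 v w) c w" by (metis phi_cyc)
  also have "\<dots> = wedge v w c w" using key[of v w c w] psi_24[of v w c] by simp
  finally show "cross7 w (cross7 v w) \<bullet> c = ((w \<bullet> w) *\<^sub>R v - (w \<bullet> v) *\<^sub>R w) \<bullet> c"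
    by (simp add: wedge_def inner_commute algebra_simps)
qed

lemma cross_scale: "cross7 (r *\<^sub>R a) b = r *\<^sub>R cross7 a b"
proof (rule vec_eq_inner)
  fix c
  have "cross7 (r *\<^sub>R a) b \<bullet> c = phi (r *\<^sub>R a) b c" by (simp add: phi_inner)
  also have "\<dots> = cross7 b c \<bullet> (r *\<^sub>R a)" by (metis phi_cyc phi_inner)
  also have "\<dots> = r * (cross7 b c \<bullet> a)" by simp
  also have "\<dots> = r * (cross7 a b \<bullet> c)" by (metis phi_cyc phi_inner)
  finally show "cross7 (r *\<^sub>R a) b \<bullet> c = (r *\<^sub>R cross7 a b) \<bullet> c" by simp
qed



lemma FS1: "(\<lambda>a b. 0) \<in> form_span S"
  unfolding form_span_def by (rule CollectI, rule exI[of _ "{}"]) simp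

lemma FS2: "g \<in> S \<Longrightarrow> (\<lambda>a b. d * g a b) \<in> form_span S"
  unfolding form_span_def by (rule CollectI, rule exI[of _ "{g}"], rule exI[of _ "\<lambda>_. d"]) simp

lemma FS3:
  assumes "f \<in> form_span S" "h \<in> form_span S"
  shows "(\<lambda>a b. f a b + h a b) \<in> form_span S"
proof -
  obtain t1 c1 where t1: "finite t1" "t1 \<subseteq> S" "f = (\<lambda>a b. \<Sum>g\<in>t1. c1 g * g a b)"
    using assms(1) unfolding form_span_def by blast
  obtain t2 c2 where t2: "finite t2" "t2 \<subseteq> S" "h = (\<lambda>a b. \<Sum>g\<in>t2. c2 g * g a b)"
    using assms(2) unfolding form_span_def by blast
  define c where "c g = (if g \<in> t1 then c1 g else 0) + (if g \<in> t2 then c2 g else 0)" for g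
  have fin: "finite (t1 \<union> t2)" using t1 t2 by simp
  have "(\<Sum>g\<in>t1 \<union> t2. c g * g a b) = (\<Sum>g\<in>t1. c1 g * g a b) + (\<Sum>g\<in>t2. c2 g * g a b)" for a b
  proof -
    have "(\<Sum>g\<in>t1 \<union> t2. c g * g a b) = (\<Sum>g\<in>t1 \<union> t2. (if g \<in> t1 then c1 g * g a b else 0))
        + (\<Sum>g\<in>t1 \<union> t2. (if g \<in> t2 then c2 g * g a b else 0))"
      unfolding c_def sum.distrib[symmetric] by (rule sum.cong) (auto simp: distrib_right)
    also have "\<dots> = (\<Sum>g\<in>(t1 \<union> t2) \<inter> t1. c1 g * g a b) + (\<Sum>g\<in>(t1 \<union> t2) \<inter> t2. c2 g * g a b)"
      by (simp only: sum.inter_restrict[OF fin, symmetric])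
    also have "(t1 \<union> t2) \<inter> t1 = t1" by auto
    also have "(t1 \<union> t2) \<inter> t2 = t2" by auto
    finally show ?thesis .
  qed
  then show ?thesis unfolding form_span_def using fin t1 t2
    by (intro CollectI exI[of _ "t1 \<union> t2"] exI[of _ c]) auto
qed

lemma FS4:
  assumes "finite I" "\<forall>i\<in>I. g i \<in> S"
  shows "(\<lambda>a b. \<Sum>i\<in>I. d i * g i a b) \<in> form_span S"
  using assms
proof (induction I rule: finite_induct)
  case empty
  then show ?case using FS1 by simp
next
  case (insert i I)
  have "(\<lambda>a b. (\<lambda>a b. d i * g i a b) a b + (\<lambda>a b. \<Sum>i\<in>I. d i * g i a b) a b) \<in> form_span S"
    using insert by (intro FS3 FS2) auto
  then show ?case using insert by simp
qed

lemma assoc_sub: "associative P \<Longrightarrow> subspace P" by (simp add: associative_def)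
lemma assoc_dim: "associative P \<Longrightarrow> dim P = 3" by (simp add: associative_def)
lemma assoc_cross: "associative P \<Longrightarrow> u \<in> P \<Longrightarrow> v \<in> P \<Longrightarrow> cross7 u v \<in> P"
  by (simp add: associative_def)

lemma OB:
  assumes "associative P"
  obtains u w z where "P = span {u,w,z}" "u \<in> P" "w \<in> P" "z \<in> P" "u \<noteq> 0" "w \<noteq> 0" "z \<noteq> 0"
    "u \<bullet> w = 0" "u \<bullet> z = 0" "w \<bullet> z = 0" "independent {u,w,z}" "card {u,w,z} = 3"
proof -
  have sP: "subspace P" using assms by (rule assoc_sub)
  obtain B where B: "independent B" "B \<subseteq> span P" "P \<subseteq> span B" "card B = dim P" "pairwise orthogonal B"
    using orthogonal_basis_exists[of P] by blast
  have "span P = P" using sP by simp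
  then have BP: "B \<subseteq> P" using B(2) by (metis)
  have "span B \<subseteq> P" using BP sP by (rule span_minimal)
  then have PB: "P = span B" using B(3) by auto
  have "card B = 3" using B(4) assoc_dim[OF assms] by simp
  then obtain u w z where uwz: "B = {u,w,z}" "u \<noteq> w" "w \<noteq> z" "u \<noteq> z" by (auto simp: card_3_iff)
  have "0 \<notin> B" using B(1) dependent_zero by blast
  then show ?thesis
    using that[of u w z] PB BP uwz B(1,5) \<open>card B = 3\<close>
    by (auto simp: pairwise_def orthogonal_def inner_commute)
qed

lemma zero_if_orth:
  assumes "y \<in> span S" "\<And>e. e \<in> S \<Longrightarrow> y \<bullet> e = 0"
  shows "(y::real^7) = 0"
proof -
  have "orthogonal y y" using orthogonal_to_span[OF assms(1), of y] assms(2)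
    by (simp add: orthogonal_def)
  then show ?thesis by (simp add: orthogonal_def)
qed

definition rep :: "vec7 set \<Rightarrow> form2 \<Rightarrow> bool" where
  "rep P f \<longleftrightarrow> (\<exists>R. (\<forall>b. R b \<in> P) \<and> (\<forall>a b. f a b = R b \<bullet> a) \<and> (\<forall>a b. f a b = - f b a))"

lemma Lambda2_rep:
  assumes sP: "subspace P" and f: "f \<in> Lambda2 P"
  shows "rep P f"
proof -
  obtain t c where t: "finite t" "t \<subseteq> {wedge u v | u v. u \<in> P \<and> v \<in> P}"
    "f = (\<lambda>a b. \<Sum>g\<in>t. c g * g a b)"
    using f unfolding Lambda2_def form_span_def by blast
  have "\<forall>g\<in>t. \<exists>uv. fst uv \<in> P \<and> snd uv \<in> P \<and> g = wedge (fst uv) (snd uv)"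
    using t(2) by fastforce
  then obtain UV where UV: "\<And>g. g \<in> t \<Longrightarrow> fst (UV g) \<in> P \<and> snd (UV g) \<in> P \<and> g = wedge (fst (UV g)) (snd (UV g))"
    by metis
  define R where "R b = (\<Sum>g\<in>t. c g *\<^sub>R ((snd (UV g) \<bullet> b) *\<^sub>R fst (UV g) - (fst (UV g) \<bullet> b) *\<^sub>R snd (UV g)))" for b
  have 1: "R b \<in> P" for b
    unfolding R_def using UV sP
    by (intro subspace_sum subspace_scale subspace_diff) auto
  have g1: "g a b = (snd (UV g) \<bullet> b) * (fst (UV g) \<bullet> a) - (fst (UV g) \<bullet> b) * (snd (UV g) \<bullet> a)"
    if "g \<in> t" for g a b
  proof -
    have "g a b = wedge (fst (UV g)) (snd (UV g)) a b" using UV[OF that] by metis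
    then show ?thesis by (simp add: wedge_def algebra_simps)
  qed
  have g2: "g a b = - g b a" if "g \<in> t" for g a b
    using g1[OF that, of a b] g1[OF that, of b a] by simp
  have 2: "f a b = R b \<bullet> a" for a b
    unfolding t(3) R_def inner_sum_left
    by (rule sum.cong) (simp_all add: g1 algebra_simps inner_commute)
  have 3: "f a b = - f b a" for a b
    unfolding t(3) sum_negf[symmetric]
    by (rule sum.cong) (simp_all add: g2[of _ a b])
  show ?thesis unfolding rep_def using 1 2 3 by blast
qed



lemma rep_kernel:
  assumes aP: "associative P" and r: "rep P f"
  shows "\<exists>B. finite B \<and> card B \<le> 2 \<and> (\<forall>a b. (\<forall>y\<in>B. a \<bullet> y = 0) \<longrightarrow> f a b = 0)"
proof -
  have sP: "subspace P" using aP by (rule assoc_sub)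
  obtain R where R: "\<And>b. R b \<in> P" "\<And>a b. f a b = R b \<bullet> a" "\<And>a b. f a b = - f b a"
    using r unfolding rep_def by blast
  have ff: "f a a = 0" for a using R(3)[of a a] by simp
  obtain u w z where B: "P = span {u,w,z}" "u \<in> P" "w \<in> P" "z \<in> P" "u \<noteq> 0" "w \<noteq> 0" "z \<noteq> 0"
    "u \<bullet> w = 0" "u \<bullet> z = 0" "w \<bullet> z = 0"
    using OB[OF aP] by metis
  define c1 where "c1 = f w z"
  define c2 where "c2 = - f u z"
  define c3 where "c3 = f u w"
  define k where "k = (if c1 = 0 \<and> c2 = 0 \<and> c3 = 0 then u else c1 *\<^sub>R u + c2 *\<^sub>R w + c3 *\<^sub>R z)"
  have kP: "k \<in> P" unfolding k_def using sP B
    by (auto intro!: subspace_add subspace_scale)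
  have uu: "u \<bullet> u > 0" "w \<bullet> w > 0" "z \<bullet> z > 0" using B by auto
  have kne: "k \<noteq> 0"
  proof
    assume k0: "k = 0"
    show False
    proof (cases "c1 = 0 \<and> c2 = 0 \<and> c3 = 0")
      case True
      then have "k = u" by (simp add: k_def)
      then show ?thesis using k0 B(5) by simp
    next
      case False
      have kk: "k = c1 *\<^sub>R u + c2 *\<^sub>R w + c3 *\<^sub>R z" unfolding k_def using False by (rule if_not_P)
      have "k \<bullet> u = c1 * (u \<bullet> u)" "k \<bullet> w = c2 * (w \<bullet> w)" "k \<bullet> z = c3 * (z \<bullet> z)"
        unfolding kk using B by (simp_all add: algebra_simps inner_commute)
      then show False using k0 False uu by auto
    qed
  qed
  have fek: "f e k = 0" if "e \<in> {u,w,z}" for e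
  proof (cases "c1 = 0 \<and> c2 = 0 \<and> c3 = 0")
    case True
    then show ?thesis using that ff R(3)[of z u] R(3)[of w u]
      by (auto simp: k_def c1_def c2_def c3_def)
  next
    case False
    have kk: "k = c1 *\<^sub>R u + c2 *\<^sub>R w + c3 *\<^sub>R z" unfolding k_def using False by (rule if_not_P)
    have "f e k = - (R e \<bullet> k)" using R(2,3) by metis
    also have "\<dots> = - (c1 * f u e + c2 * f w e + c3 * f z e)"
      unfolding kk by (simp add: R(2) algebra_simps)
    finally show ?thesis using that ff R(3)[of w u] R(3)[of z u] R(3)[of z w]
      by (auto simp: c1_def c2_def c3_def algebra_simps)
  qed
  have Rk: "R k = 0"
    by (rule zero_if_orth[of _ "{u,w,z}"]) (use R(1) B(1) fek R(2) in auto)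
  have Rbk: "R b \<bullet> k = 0" for b
    using R(2)[of k b] R(3)[of k b] R(2)[of b k] Rk by simp
  define V where "V = {y \<in> P. y \<bullet> k = 0}"
  have sV: "subspace V" unfolding V_def subspace_def using sP
    by (auto simp: subspace_def inner_add_left)
  have "k \<notin> V" unfolding V_def using kne by simp
  moreover have "V \<subseteq> P" unfolding V_def by auto
  ultimately have "V \<subset> P" using kP by blast
  then have "span V \<subset> span P" using sV sP by (metis span_eq_iff)
  then have "dim V < dim P" by (rule dim_psubset)
  then have dV: "dim V \<le> 2" using assoc_dim[OF aP] by simp
  obtain B where BV: "B \<subseteq> V" "independent B" "V \<subseteq> span B" "card B = dim V"
    using basis_exists[of V] by blast
  have "\<forall>a b. (\<forall>y\<in>B. a \<bullet> y = 0) \<longrightarrow> f a b = 0"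
  proof (intro allI impI)
    fix a b assume a: "\<forall>y\<in>B. a \<bullet> y = 0"
    have "R b \<in> V" unfolding V_def using R(1) Rbk by simp
    then have "R b \<in> span B" using BV by auto
    then have "orthogonal a (R b)" by (rule orthogonal_to_span) (use a in \<open>simp add: orthogonal_def\<close>)
    then show "f a b = 0" using R(2) by (simp add: orthogonal_def inner_commute)
  qed
  moreover have "finite B" using BV(2) by (rule finiteI_independent)
  ultimately show ?thesis using BV(4) dV by (intro exI[of _ B]) auto
qed

lemma rank_lemma:
  assumes aP: "associative P" and aQ: "associative Q" and rP: "rep P \<alpha>" and rQ: "rep Q \<beta>"
    and eq: "\<And>a b. contr x a b = \<alpha> a b - \<beta> a b"
  shows "x = 0"
proof -
  obtain B1 where B1: "finite B1" "card B1 \<le> 2" "\<And>a b. (\<forall>y\<in>B1. a \<bullet> y = 0) \<Longrightarrow> \<alpha> a b = 0"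
    using rep_kernel[OF aP rP] by blast
  obtain B2 where B2: "finite B2" "card B2 \<le> 2" "\<And>a b. (\<forall>y\<in>B2. a \<bullet> y = 0) \<Longrightarrow> \<beta> a b = 0"
    using rep_kernel[OF aQ rQ] by blast
  define S where "S = B1 \<union> B2 \<union> {x}"
  have fS: "finite S" using B1 B2 by (simp add: S_def)
  have c1: "card S \<le> card (B1 \<union> B2) + card {x}" unfolding S_def by (rule card_Un_le)
  have c2: "card (B1 \<union> B2) \<le> card B1 + card B2" by (rule card_Un_le)
  have "card S \<le> card B1 + card B2 + card {x}" using c1 c2 by linarith
  then have "card S \<le> 5" using B1 B2 by simp
  moreover have "dim S \<le> card S" using fS by (intro dim_le_card) (auto intro: span_base)
  ultimately have "dim S < DIM(real^7)" by simp
  then obtain a where a: "a \<noteq> 0" "\<And>y. y \<in> span S \<Longrightarrow> orthogonal a y"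
    using orthogonal_to_subspace_exists by blast
  have ao: "a \<bullet> y = 0" if "y \<in> S" for y using a(2)[OF span_base[OF that]] by (simp add: orthogonal_def)
  have "contr x a b = 0" for b
    using eq[of a b] B1(3)[of a b] B2(3)[of a b] ao by (simp add: S_def)
  then have "cross7 x a \<bullet> cross7 x a = 0"
    by (simp add: contr_def phi_inner)
  moreover have "x \<bullet> a = 0" using ao[of x] by (simp add: S_def inner_commute)
  ultimately have "(x \<bullet> x) * (a \<bullet> a) = 0" using cross_norm[of x a] by simp
  then show "x = 0" using a(1) by simp
qed

lemma rep_zero:
  assumes rP: "rep P \<alpha>" and rQ: "rep Q \<alpha>" and PQ: "P \<inter> Q \<subseteq> span {p}"
  shows "\<alpha> a b = 0"
proof -
  obtain R1 where R1: "\<And>b. R1 b \<in> P" "\<And>a b. \<alpha> a b = R1 b \<bullet> a" "\<And>a b. \<alpha> a b = - \<alpha> b a"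
    using rP unfolding rep_def by blast
  obtain R2 where R2: "\<And>b. R2 b \<in> Q" "\<And>a b. \<alpha> a b = R2 b \<bullet> a"
    using rQ unfolding rep_def by blast
  have "R1 b = R2 b" for b
  proof (rule vec_eq_inner)
    fix c show "R1 b \<bullet> c = R2 b \<bullet> c" using R1(2)[of c b] R2(2)[of c b] by linarith
  qed
  have "R1 b \<in> span {p}" for b
  proof -
    have "R1 b \<in> P \<inter> Q" using R1(1)[of b] R2(1)[of b] \<open>R1 b = R2 b\<close> by simp
    then show ?thesis using PQ by (rule subsetD[rotated])
  qed
  then have "\<exists>l. R1 b = l *\<^sub>R p" for b using real_vector.span_singleton[of p] by auto
  then obtain l where l: "\<And>b. R1 b = l b *\<^sub>R p" by metis
  show ?thesis
  proof (cases "p = 0")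
    case True then show ?thesis using R1(2) l by simp
  next
    case False
    then have pp: "p \<bullet> p \<noteq> 0" by simp
    have "\<alpha> p p = 0" using R1(3)[of p p] by linarith
    then have "l p = 0" using R1(2)[of p p] l[of p] pp by simp
    then have hb: "\<alpha> b p = 0" for b using R1(2)[of b p] l[of p] by simp
    have "\<alpha> p b = 0" using R1(3)[of p b] hb[of b] by linarith
    then have "l b = 0" using R1(2)[of p b] l[of b] pp by simp
    then show ?thesis using R1(2)[of a b] l[of b] by simp
  qed
qed


lemma B3:
  assumes aP: "associative P" and "p \<in> P" "r \<in> P" "p \<noteq> 0" "r \<noteq> 0" "p \<bullet> r = 0"
  shows "P = span {p, r, cross7 p r}"
proof -
  define z where "z = cross7 p r"
  have sP: "subspace P" using aP by (rule assoc_sub)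
  have zP: "z \<in> P" using assms assoc_cross unfolding z_def by blast
  have zp: "z \<bullet> p = 0" "z \<bullet> r = 0" unfolding z_def by (simp_all add: cross_orth1 cross_orth2)
  have "z \<bullet> z = (p \<bullet> p) * (r \<bullet> r)" unfolding z_def using cross_norm[of p r] assms(6) by simp
  then have z0: "z \<noteq> 0" using assms by auto
  have d: "p \<noteq> r" "p \<noteq> z" "r \<noteq> z" using assms zp z0 by (auto simp: inner_commute)
  have po: "pairwise orthogonal {p, r, z}" using assms zp
    by (auto simp: pairwise_def orthogonal_def inner_commute)
  have ind: "independent {p, r, z}"
    by (rule pairwise_orthogonal_independent[OF po]) (use assms z0 in auto)
  have c: "card {p, r, z} = 3" using d by simp
  have sub: "{p, r, z} \<subseteq> P" using assms zP by auto
  have "P \<subseteq> span {p, r, z}"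
    by (rule card_ge_dim_independent[OF sub ind]) (simp add: c assoc_dim[OF aP])
  moreover have "span {p, r, z} \<subseteq> P" using sub sP by (rule span_minimal)
  ultimately show ?thesis unfolding z_def by auto
qed

lemma small_int:
  assumes aP: "associative P" and aQ: "associative Q" and ne: "P \<noteq> Q"
  shows "\<exists>p. P \<inter> Q \<subseteq> span {p}"
proof (cases "P \<inter> Q \<subseteq> {0}")
  case True
  then show ?thesis by (intro exI[of _ 0]) auto
next
  case False
  then obtain p where p: "p \<in> P" "p \<in> Q" "p \<noteq> 0" by auto
  have sP: "subspace P" "subspace Q" using aP aQ by (simp_all add: assoc_sub)
  have "P \<inter> Q \<subseteq> span {p}"
  proof
    fix q assume q: "q \<in> P \<inter> Q"
    show "q \<in> span {p}"
    proof (rule ccontr)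
      assume nq: "q \<notin> span {p}"
      define r where "r = q - ((q \<bullet> p) / (p \<bullet> p)) *\<^sub>R p"
      have rPQ: "r \<in> P" "r \<in> Q" unfolding r_def using q p sP
        by (auto intro!: subspace_diff subspace_scale)
      have rp: "p \<bullet> r = 0" using p(3) unfolding r_def by (simp add: algebra_simps inner_commute)
      have r0: "r \<noteq> 0"
      proof
        assume "r = 0"
        then have "q = ((q \<bullet> p) / (p \<bullet> p)) *\<^sub>R p" unfolding r_def by simp
        then have "q \<in> span {p}" by (metis span_base span_scale singletonI)
        then show False using nq by simp
      qed
      have "P = span {p, r, cross7 p r}" using B3[OF aP p(1) rPQ(1) p(3) r0 rp] .
      moreover have "Q = span {p, r, cross7 p r}" using B3[OF aQ p(2) rPQ(2) p(3) r0 rp] .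
      ultimately show False using ne by simp
    qed
  qed
  then show ?thesis by blast
qed

lemma contr_linear_sum:
  "contr (\<Sum>g\<in>t. d g *\<^sub>R y g) a b = (\<Sum>g\<in>t. d g * contr (y g) a b)"
  by (simp add: contr_inner inner_sum_right)

lemma Theta_decomp:
  assumes aP: "associative P" and f: "f \<in> Theta P"
  shows "\<exists>\<alpha> v. \<alpha> \<in> Lambda2 P \<and> v \<in> P \<and> f = (\<lambda>a b. \<alpha> a b + contr v a b)"
proof -
  have sP: "subspace P" using aP by (rule assoc_sub)
  obtain \<alpha>0 \<beta> where ab: "f = (\<lambda>a b. \<alpha>0 a b + \<beta> a b)" "\<alpha>0 \<in> Lambda2 P" "\<beta> \<in> PsiP P"
    using f unfolding Theta_def by blast
  obtain t c where t: "finite t" "t \<subseteq> {Psi2 u v | u v. u \<in> P \<and> v \<in> P}"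
    "\<beta> = (\<lambda>a b. \<Sum>g\<in>t. c g * g a b)"
    using ab(3) unfolding PsiP_def form_span_def by blast
  have "\<forall>g\<in>t. \<exists>uv. fst uv \<in> P \<and> snd uv \<in> P \<and> g = Psi2 (fst uv) (snd uv)"
    using t(2) by fastforce
  then obtain UV where UV: "\<And>g. g \<in> t \<Longrightarrow> fst (UV g) \<in> P \<and> snd (UV g) \<in> P \<and> g = Psi2 (fst (UV g)) (snd (UV g))"
    by metis
  define y where "y g = cross7 (fst (UV g)) (snd (UV g))" for g
  define v where "v = - (\<Sum>g\<in>t. c g *\<^sub>R y g)"
  define \<alpha>1 where "\<alpha>1 = (\<lambda>a b. \<Sum>g\<in>t. c g * wedge (fst (UV g)) (snd (UV g)) a b)"
  have vP: "v \<in> P" unfolding v_def y_def using UV sP assoc_cross[OF aP]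
    by (intro subspace_neg subspace_sum subspace_scale) auto
  have a1: "\<alpha>1 \<in> Lambda2 P" unfolding \<alpha>1_def Lambda2_def
    by (rule FS4) (use t(1) UV in blast)+
  have g: "g a b = wedge (fst (UV g)) (snd (UV g)) a b - contr (y g) a b" if "g \<in> t" for g a b
  proof -
    have "g a b = Psi2 (fst (UV g)) (snd (UV g)) a b" using UV[OF that] by metis
    then show ?thesis using key[of "fst (UV g)" "snd (UV g)" a b]
      by (simp add: Psi2_def contr_def y_def)
  qed
  have "\<beta> a b = \<alpha>1 a b + contr v a b" for a b
  proof -
    have "\<beta> a b = (\<Sum>g\<in>t. c g * (wedge (fst (UV g)) (snd (UV g)) a b - contr (y g) a b))"
      unfolding t(3) by (rule sum.cong) (simp_all add: g)
    also have "\<dots> = \<alpha>1 a b - (\<Sum>g\<in>t. c g * contr (y g) a b)"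
      unfolding \<alpha>1_def by (simp add: algebra_simps sum_subtractf)
    also have "\<dots> = \<alpha>1 a b + contr v a b"
      unfolding v_def contr_linear_sum[symmetric] by (simp add: contr_inner)
    finally show ?thesis .
  qed
  then have "f = (\<lambda>a b. (\<lambda>a b. \<alpha>0 a b + \<alpha>1 a b) a b + contr v a b)" unfolding ab(1)
    by (simp add: algebra_simps)
  moreover have "(\<lambda>a b. \<alpha>0 a b + \<alpha>1 a b) \<in> Lambda2 P"
    using ab(2) a1 unfolding Lambda2_def by (rule FS3)
  ultimately show ?thesis using vP by blast
qed

lemma contr_in_Theta:
  assumes aP: "associative P" and vP: "v \<in> P"
  shows "contr v \<in> Theta P"
proof (cases "v = 0")
  case True
  have "contr v = (\<lambda>a b. (\<lambda>a b. 0) a b + (\<lambda>a b. 0) a b)"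
    using True by (intro ext) (simp add: contr_inner)
  moreover have "(\<lambda>a b. 0) \<in> Lambda2 P" "(\<lambda>a b. 0) \<in> PsiP P"
    unfolding Lambda2_def PsiP_def by (rule FS1)+
  ultimately show ?thesis unfolding Theta_def mem_Collect_eq
    by (intro exI[of _ "\<lambda>a b. 0"]) simp
next
  case False
  have sP: "subspace P" using aP by (rule assoc_sub)
  obtain u1 u2 u3 where B: "P = span {u1,u2,u3}" "u1 \<in> P" "u2 \<in> P" "u3 \<in> P"
    "independent {u1,u2,u3}" "card {u1,u2,u3} = 3"
    using OB[OF aP] by metis
  have "\<not> {u1,u2,u3} \<subseteq> span {v}"
  proof
    assume "{u1,u2,u3} \<subseteq> span {v}"
    then have "card {u1,u2,u3} \<le> dim (span {v})" using B(5) by (rule independent_card_le_dim)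
    then show False using B(6) False by simp
  qed
  then obtain b where b: "b \<in> P" "b \<notin> span {v}" using B by auto
  define w where "w = b - ((b \<bullet> v) / (v \<bullet> v)) *\<^sub>R v"
  have wP: "w \<in> P" unfolding w_def using b vP sP by (auto intro!: subspace_diff subspace_scale)
  have wv: "w \<bullet> v = 0" using False unfolding w_def by (simp add: algebra_simps inner_commute)
  have w0: "w \<noteq> 0"
  proof
    assume "w = 0"
    then have "b = ((b \<bullet> v) / (v \<bullet> v)) *\<^sub>R v" unfolding w_def by simp
    then have "b \<in> span {v}" by (metis span_base span_scale singletonI)
    then show False using b by simp
  qed
  define y where "y = cross7 v w"
  define x where "x = (1 / (w \<bullet> w)) *\<^sub>R w"
  have yP: "y \<in> P" unfolding y_def using assoc_cross[OF aP vP wP] .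
  have xP: "x \<in> P" unfolding x_def using wP sP by (auto intro: subspace_scale)
  have "cross7 x y = (1 / (w \<bullet> w)) *\<^sub>R cross7 w y" unfolding x_def by (rule cross_scale)
  also have "cross7 w y = (w \<bullet> w) *\<^sub>R v" unfolding y_def cross_triple wv by simp
  finally have xy: "cross7 x y = v" using w0 by simp
  have "contr v = (\<lambda>a b. (\<lambda>a b. 1 * wedge x y a b) a b + (\<lambda>a b. (-1) * Psi2 x y a b) a b)"
    unfolding xy[symmetric] contr_def by (intro ext) (simp add: key Psi2_def)
  moreover have "(\<lambda>a b. 1 * wedge x y a b) \<in> Lambda2 P" unfolding Lambda2_def
    by (rule FS2) (use xP yP in blast)
  moreover have "(\<lambda>a b. (-1) * Psi2 x y a b) \<in> PsiP P" unfolding PsiP_def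
    by (rule FS2) (use xP yP in blast)
  ultimately show ?thesis unfolding Theta_def mem_Collect_eq
    by (intro exI[of _ "\<lambda>a b. 1 * wedge x y a b"] exI[of _ "\<lambda>a b. (-1) * Psi2 x y a b"]) simp
qed

theorem corollary4p13:
  fixes P Q :: "(real^7) set"
  assumes "associative P" and "associative Q" and "P \<noteq> Q"
  shows "Theta P \<inter> Theta Q = {contr v | v. v \<in> P \<inter> Q}"
proof
  show "{contr v | v. v \<in> P \<inter> Q} \<subseteq> Theta P \<inter> Theta Q"
    using contr_in_Theta assms by blast
next
  show "Theta P \<inter> Theta Q \<subseteq> {contr v | v. v \<in> P \<inter> Q}"
  proof
    fix f assume f: "f \<in> Theta P \<inter> Theta Q"
    obtain \<alpha> v where av: "\<alpha> \<in> Lambda2 P" "v \<in> P" "f = (\<lambda>a b. \<alpha> a b + contr v a b)"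
      using Theta_decomp[OF assms(1)] f by blast
    obtain \<beta> w where bw: "\<beta> \<in> Lambda2 Q" "w \<in> Q" "f = (\<lambda>a b. \<beta> a b + contr w a b)"
      using Theta_decomp[OF assms(2)] f by blast
    have rP: "rep P \<alpha>" using Lambda2_rep[OF assoc_sub[OF assms(1)] av(1)] .
    have rQ: "rep Q \<beta>" using Lambda2_rep[OF assoc_sub[OF assms(2)] bw(1)] .
    have e: "\<alpha> a b + contr v a b = \<beta> a b + contr w a b" for a b
      using av(3) bw(3) by metis
    have "contr (w - v) a b = \<alpha> a b - \<beta> a b" for a b
      using e[of a b] by (simp add: contr_inner inner_diff_right)
    then have "w - v = 0" by (rule rank_lemma[OF assms(1,2) rP rQ])
    then have vw: "v = w" by simp
    then have "\<alpha> = \<beta>" using e by (intro ext) simp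
    then have rQ': "rep Q \<alpha>" using rQ by simp
    obtain p where p: "P \<inter> Q \<subseteq> span {p}" using small_int[OF assms] by blast
    have "\<alpha> a b = 0" for a b by (rule rep_zero[OF rP rQ' p])
    then have "f = contr v" using av(3) by (intro ext) simp
    then show "f \<in> {contr v | v. v \<in> P \<inter> Q}" using av(2) bw(2) vw by blast
  qed
qed


end
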